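(* Let $m\ge 2$ and $r\ge 1$ be integers, and for each $i\in\{1,\dots,r\}$ let $s_i\in\{1,\dots,m-1\}$ be an integer. Let $\widetilde{R}=\mathbb{Q}[x_{i,j}\mid 0\le i\le r,\ 1\le j\le m]$ be the polynomial ring in $(r+1)m$ variables. For each $i\in\{1,\dots,r\}$, writing $s=s_i$, consider the $m$ elements $$x_{i,s}+x_{i,s+1}-x_{i-1,s}-x_{i-1,s+1},\qquad x_{i,s}x_{i,s+1}-x_{i-1,s}x_{i-1,s+1},\qquad x_{i,j}-x_{i-1,j}\ \ (1\le j\le m,\ j\neq s,s+1).$$ Then the sequence of $rm$ elements of $\widetilde{R}$ obtained by listing these elements for $i=1$, then for $i=2$, and so on up to $i=r$, is a regular sequence in $\widetilde{R}$.
   Context: A sequence $f_1,\dots,f_n$ in a commutative ring $A$ is regular if for each $k$ the element $f_k$ is not a zero divisor in $A/(f_1,\dots,f_{k-1})$ and $A/(f_1,\dots,f_n)\neq 0$. (In the paper these elements arise from a resolution $D$ of a closed braid diagram on $m$ strands with $r$ wide edges, the $i$-th wide edge being in position $s_i$; the variables $x_{i,j}$ label the arcs between consecutive wide edges.) *)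

theory Defs
  imports Complex_Main "HOL-Library.Poly_Mapping"
begin

text \<open>Multivariate polynomials over \<rat> in variables indexed by pairs (i,j):
  a polynomial maps monomials (finitely supported exponent vectors) to coefficients.\<close>
type_synonym mpoly = "((nat \<times> nat) \<Rightarrow>\<^sub>0 nat) \<Rightarrow>\<^sub>0 rat"

definition Var :: "nat \<Rightarrow> nat \<Rightarrow> mpoly" where
  "Var i j = Poly_Mapping.single (Poly_Mapping.single (i, j) 1) 1"

definition poly_ring_in :: "(nat \<times> nat) set \<Rightarrow> mpoly set" where
  "poly_ring_in V = {p::mpoly. \<forall>mon \<in> Poly_Mapping.keys p. Poly_Mapping.keys mon \<subseteq> V}"

definition ideal_in :: "'a::comm_ring_1 set \<Rightarrow> 'a list \<Rightarrow> 'a set" where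
  "ideal_in A fs = {(\<Sum>k<length fs. c k * fs ! k) | c. \<forall>k. c k \<in> A}"

definition regular_seq_in :: "'a::comm_ring_1 set \<Rightarrow> 'a list \<Rightarrow> bool" where
  "regular_seq_in A fs \<longleftrightarrow>
     set fs \<subseteq> A \<and>
     (\<forall>k < length fs. \<forall>a \<in> A.
        a * fs ! k \<in> ideal_in A (take k fs) \<longrightarrow> a \<in> ideal_in A (take k fs)) \<and>
     1 \<notin> ideal_in A fs"

definition edge_elems :: "nat \<Rightarrow> nat \<Rightarrow> nat \<Rightarrow> mpoly list" where
  "edge_elems m i s =
     [Var i s + Var i (s+1) - Var (i-1) s - Var (i-1) (s+1),
      Var i s * Var i (s+1) - Var (i-1) s * Var (i-1) (s+1)]
     @ map (\<lambda>j. Var i j - Var (i-1) j) (filter (\<lambda>j. j \<noteq> s \<and> j \<noteq> s+1) [1..<m+1])"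

definition full_seq :: "nat \<Rightarrow> nat \<Rightarrow> (nat \<Rightarrow> nat) \<Rightarrow> mpoly list" where
  "full_seq m r s = concat (map (\<lambda>i. edge_elems m i (s i)) [1..<r+1])"

end

theory Submission
  imports Defs "HOL-Library.Product_Lexorder"
begin


lemma "(a::mpoly) * b = 0 \<Longrightarrow> a \<noteq> 0 \<Longrightarrow> b = 0" by simp

definition X :: "nat \<times> nat \<Rightarrow> mpoly" where
  "X v = Poly_Mapping.single (Poly_Mapping.single v 1) 1"

lemma Var_X: "Var i j = X (i,j)" by (simp add: Var_def X_def)

definition monev :: "(nat \<times> nat \<Rightarrow> mpoly) \<Rightarrow> ((nat \<times> nat) \<Rightarrow>\<^sub>0 nat) \<Rightarrow> mpoly" where
  "monev \<rho> mon = (\<Prod>v\<in>Poly_Mapping.keys mon. \<rho> v ^ Poly_Mapping.lookup mon v)"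

definition subst :: "(nat \<times> nat \<Rightarrow> mpoly) \<Rightarrow> mpoly \<Rightarrow> mpoly" where
  "subst \<rho> P = (\<Sum>mon\<in>Poly_Mapping.keys P.
      Poly_Mapping.single 0 (Poly_Mapping.lookup P mon) * monev \<rho> mon)"

lemma monev_superset:
  assumes "finite K" "Poly_Mapping.keys mon \<subseteq> K"
  shows "monev \<rho> mon = (\<Prod>v\<in>K. \<rho> v ^ Poly_Mapping.lookup mon v)"
  unfolding monev_def
  by (rule prod.mono_neutral_left) (use assms in \<open>auto simp: in_keys_iff\<close>)

lemma monev_add: "monev \<rho> (a + b) = monev \<rho> a * monev \<rho> b"
proof -
  let ?K = "Poly_Mapping.keys a \<union> Poly_Mapping.keys b"
  have "monev \<rho> (a + b) = (\<Prod>v\<in>?K. \<rho> v ^ Poly_Mapping.lookup (a+b) v)"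
    by (rule monev_superset) (auto dest: keys_add[THEN subsetD])
  also have "\<dots> = (\<Prod>v\<in>?K. \<rho> v ^ Poly_Mapping.lookup a v * \<rho> v ^ Poly_Mapping.lookup b v)"
    by (simp add: lookup_add power_add)
  also have "\<dots> = monev \<rho> a * monev \<rho> b"
    by (simp add: prod.distrib monev_superset[of ?K])
  finally show ?thesis .
qed

lemma monev_zero [simp]: "monev \<rho> 0 = 1"
  by (simp add: monev_def)

lemma subst_superset:
  assumes "finite K" "Poly_Mapping.keys P \<subseteq> K"
  shows "subst \<rho> P = (\<Sum>mon\<in>K. Poly_Mapping.single 0 (Poly_Mapping.lookup P mon) * monev \<rho> mon)"
  unfolding subst_def
  by (rule sum.mono_neutral_left) (use assms in \<open>auto simp: in_keys_iff\<close>)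

lemma subst_add: "subst \<rho> (P + Q) = subst \<rho> P + subst \<rho> Q"
proof -
  let ?K = "Poly_Mapping.keys P \<union> Poly_Mapping.keys Q"
  have "subst \<rho> (P + Q) = (\<Sum>mon\<in>?K. Poly_Mapping.single 0 (Poly_Mapping.lookup (P+Q) mon) * monev \<rho> mon)"
    by (rule subst_superset) (auto dest: keys_add[THEN subsetD])
  also have "\<dots> = subst \<rho> P + subst \<rho> Q"
    by (simp add: lookup_add single_add distrib_right sum.distrib subst_superset[of ?K])
  finally show ?thesis .
qed

lemma subst_0 [simp]: "subst \<rho> 0 = 0"
  by (simp add: subst_def)

lemma subst_uminus: "subst \<rho> (- P) = - subst \<rho> P"
proof -
  have "subst \<rho> P + subst \<rho> (-P) = 0" using subst_add[of \<rho> P "-P"] by simp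
  then show ?thesis by (metis add.inverse_unique)
qed

lemma subst_diff: "subst \<rho> (P - Q) = subst \<rho> P - subst \<rho> Q"
  using subst_add[of \<rho> P "-Q"] by (simp add: subst_uminus)

lemma subst_sum: "subst \<rho> (sum f K) = (\<Sum>k\<in>K. subst \<rho> (f k))"
  by (induction K rule: infinite_finite_induct) (auto simp: subst_add)

lemma subst_single: "subst \<rho> (Poly_Mapping.single mon c) = Poly_Mapping.single 0 c * monev \<rho> mon"
  by (subst subst_superset[of "{mon}"]) (auto simp: lookup_single)

lemma poly_rep: "(P :: 'a \<Rightarrow>\<^sub>0 'b::comm_monoid_add) =
   (\<Sum>mon\<in>Poly_Mapping.keys P. Poly_Mapping.single mon (Poly_Mapping.lookup P mon))"
proof (rule poly_mapping_eqI)
  fix k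
  show "Poly_Mapping.lookup P k = Poly_Mapping.lookup (\<Sum>mon\<in>Poly_Mapping.keys P. Poly_Mapping.single mon (Poly_Mapping.lookup P mon)) k"
    by (simp add: lookup_sum lookup_single when_def in_keys_iff)
qed

lemma single0_mult: "Poly_Mapping.single (0::(nat\<times>nat)\<Rightarrow>\<^sub>0nat) (c * d) = (Poly_Mapping.single 0 c * Poly_Mapping.single 0 d :: mpoly)"
  by (simp add: mult_single)

lemma subst_single_mult:
  "subst \<rho> (Poly_Mapping.single a c * Q) = Poly_Mapping.single 0 c * monev \<rho> a * subst \<rho> Q"
proof -
  have "Poly_Mapping.single a c * Q = (\<Sum>n\<in>Poly_Mapping.keys Q.
          Poly_Mapping.single (a + n) (c * Poly_Mapping.lookup Q n))"
    by (subst poly_rep[of Q]) (simp add: sum_distrib_left mult_single)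
  then have "subst \<rho> (Poly_Mapping.single a c * Q) = (\<Sum>n\<in>Poly_Mapping.keys Q.
        subst \<rho> (Poly_Mapping.single (a + n) (c * Poly_Mapping.lookup Q n)))"
    by (simp add: subst_sum)
  also have "\<dots> = (\<Sum>n\<in>Poly_Mapping.keys Q.
        Poly_Mapping.single 0 (c * Poly_Mapping.lookup Q n) * monev \<rho> (a + n))"
    by (simp add: subst_single)
  also have "\<dots> = (\<Sum>n\<in>Poly_Mapping.keys Q.
        Poly_Mapping.single 0 c * monev \<rho> a * (Poly_Mapping.single 0 (Poly_Mapping.lookup Q n) * monev \<rho> n))"
    by (simp add: monev_add single0_mult mult_ac)
  also have "\<dots> = Poly_Mapping.single 0 c * monev \<rho> a * subst \<rho> Q"
    by (simp add: subst_def sum_distrib_left)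
  finally show ?thesis .
qed

lemma subst_mult: "subst \<rho> (P * Q) = subst \<rho> P * subst \<rho> Q"
proof -
  have "subst \<rho> (P * Q) = subst \<rho> ((\<Sum>mon\<in>Poly_Mapping.keys P. Poly_Mapping.single mon (Poly_Mapping.lookup P mon)) * Q)"
    by (subst poly_rep[of P]) (rule refl)
  also have "\<dots> = (\<Sum>mon\<in>Poly_Mapping.keys P. Poly_Mapping.single 0 (Poly_Mapping.lookup P mon) * monev \<rho> mon * subst \<rho> Q)"
    by (simp add: sum_distrib_right subst_sum subst_single_mult)
  also have "\<dots> = subst \<rho> P * subst \<rho> Q"
    by (simp add: subst_def sum_distrib_right)
  finally show ?thesis .
qed

lemma subst_X [simp]: "subst \<rho> (X v) = \<rho> v"
  by (simp add: X_def subst_single monev_def)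

lemma subst_const [simp]: "subst \<rho> (Poly_Mapping.single 0 c) = Poly_Mapping.single 0 c"
  by (simp add: subst_single)

lemma subst_1 [simp]: "subst \<rho> 1 = 1"
  using subst_const[of \<rho> 1] by simp

lemma subst_pow: "subst \<rho> (P ^ n) = subst \<rho> P ^ n"
  by (induction n) (auto simp: subst_mult)

lemma X_pow: "X v ^ n = Poly_Mapping.single (Poly_Mapping.single v n) 1"
  by (induction n) (auto simp: X_def mult_single single_add[symmetric])

lemma X_prod: "finite K \<Longrightarrow> (\<Prod>v\<in>K. X v ^ f v) = Poly_Mapping.single (\<Sum>v\<in>K. Poly_Mapping.single v (f v)) 1"
  by (induction K rule: finite_induct) (auto simp: X_pow mult_single)

lemma monev_X: "monev X mon = Poly_Mapping.single mon 1"
  unfolding monev_def by (simp add: X_prod poly_rep[of mon, symmetric])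

lemma subst_X_id [simp]: "subst X P = P"
  unfolding subst_def monev_X
  by (subst (3) poly_rep[of P]) (simp add: mult_single)




abbreviation "pr \<equiv> poly_ring_in"

lemma pr_add: "p \<in> pr W \<Longrightarrow> q \<in> pr W \<Longrightarrow> p + q \<in> pr W"
  unfolding poly_ring_in_def by (auto dest!: keys_add[THEN subsetD])

lemma pr_uminus: "p \<in> pr W \<Longrightarrow> - p \<in> pr W"
  unfolding poly_ring_in_def by simp

lemma pr_diff: "p \<in> pr W \<Longrightarrow> q \<in> pr W \<Longrightarrow> p - q \<in> pr W"
proof -
  assume "p \<in> pr W" "q \<in> pr W"
  then have "p + (- q) \<in> pr W" by (intro pr_add pr_uminus)
  then show ?thesis by simp
qed

lemma pr_mult:
  assumes "p \<in> pr W" "q \<in> pr W" shows "p * q \<in> pr W"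
  unfolding poly_ring_in_def
proof (intro CollectI ballI)
  fix mon assume mon: "mon \<in> Poly_Mapping.keys (p * q)"
  have p: "\<forall>mon\<in>Poly_Mapping.keys p. Poly_Mapping.keys mon \<subseteq> W"
    and q: "\<forall>mon\<in>Poly_Mapping.keys q. Poly_Mapping.keys mon \<subseteq> W"
    using assms unfolding poly_ring_in_def by auto
  obtain a b where "mon = a + b" "a \<in> Poly_Mapping.keys p" "b \<in> Poly_Mapping.keys q"
    using keys_mult[of p q] mon by blast
  then show "Poly_Mapping.keys mon \<subseteq> W" using p q keys_add[of a b] by blast
qed

lemma pr_X: "v \<in> W \<Longrightarrow> X v \<in> pr W"
  unfolding poly_ring_in_def X_def by simp

lemma pr_const: "Poly_Mapping.single 0 c \<in> pr W"
  unfolding poly_ring_in_def by (cases "c = 0") auto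

lemma pr_0 [simp]: "0 \<in> pr W"
  using pr_const[of 0 W] by simp

lemma pr_1 [simp]: "1 \<in> pr W"
  using pr_const[of 1 W] by simp

lemma pr_mono: "W \<subseteq> W' \<Longrightarrow> p \<in> pr W \<Longrightarrow> p \<in> pr W'"
  unfolding poly_ring_in_def by blast

lemma pr_UNIV [simp]: "p \<in> pr UNIV"
  unfolding poly_ring_in_def by blast

lemma pr_induct [consumes 1, case_names const var add mult]:
  assumes "P \<in> pr W"
    and const: "\<And>c. Q (Poly_Mapping.single 0 c)"
    and var: "\<And>v. v \<in> W \<Longrightarrow> Q (X v)"
    and add: "\<And>p q. Q p \<Longrightarrow> Q q \<Longrightarrow> Q (p + q)"
    and mult: "\<And>p q. Q p \<Longrightarrow> Q q \<Longrightarrow> Q (p * q)"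
  shows "Q P"
proof -
  have Q0: "Q 0" using const[of 0] by simp
  have Q1: "Q 1" using const[of 1] by simp
  have sumQ: "finite K \<Longrightarrow> (\<And>k. k \<in> K \<Longrightarrow> Q (f k)) \<Longrightarrow> Q (sum f K)" for K and f :: "_ \<Rightarrow> mpoly"
    by (induction K rule: finite_induct) (auto simp: Q0 add)
  have prodQ: "finite K \<Longrightarrow> (\<And>k. k \<in> K \<Longrightarrow> Q (f k)) \<Longrightarrow> Q (prod f K)" for K and f :: "_ \<Rightarrow> mpoly"
    by (induction K rule: finite_induct) (auto simp: Q1 mult)
  have powQ: "v \<in> W \<Longrightarrow> Q (X v ^ n)" for v n
    by (induction n) (auto simp: Q1 mult var)
  have "Q (subst X P)"
    unfolding subst_def monev_def
  proof (rule sumQ[OF finite_keys], rule mult[OF const], rule prodQ[OF finite_keys])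
    fix mon v assume "mon \<in> Poly_Mapping.keys P" "v \<in> Poly_Mapping.keys mon"
    then have "v \<in> W" using assms(1) unfolding poly_ring_in_def by blast
    then show "Q (X v ^ Poly_Mapping.lookup mon v)" by (rule powQ)
  qed
  then show ?thesis by simp
qed

lemma subst_fix:
  assumes "P \<in> pr W" "\<And>v. v \<in> W \<Longrightarrow> \<theta> v = X v"
  shows "subst \<theta> P = P"
  using assms(1) by (induction rule: pr_induct) (auto simp: assms(2) subst_add subst_mult)

definition comp_s :: "(nat \<times> nat \<Rightarrow> mpoly) \<Rightarrow> (nat \<times> nat \<Rightarrow> mpoly) \<Rightarrow> (nat \<times> nat \<Rightarrow> mpoly)" where
  "comp_s \<rho> \<theta> = (\<lambda>v. subst \<rho> (\<theta> v))"

lemma subst_comp: "subst (comp_s \<rho> \<theta>) P = subst \<rho> (subst \<theta> P)"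
proof -
  have "P \<in> pr UNIV" by simp
  then show ?thesis
    by (induction rule: pr_induct) (auto simp: comp_s_def subst_add subst_mult)
qed

lemma subst_in:
  assumes "P \<in> pr W" "\<And>v. v \<in> W \<Longrightarrow> \<theta> v \<in> pr W'"
  shows "subst \<theta> P \<in> pr W'"
  using assms(1) by (induction rule: pr_induct) (auto simp: assms(2) subst_add subst_mult pr_const pr_add pr_mult)

lemma subst_divide:
  assumes "P \<in> pr W" "y \<in> W" "g \<in> pr W"
  shows "\<exists>Q \<in> pr W. P - subst (X(y := g)) P = (X y - g) * Q"
proof -
  have "P \<in> pr W \<and> (\<exists>Q \<in> pr W. P - subst (X(y := g)) P = (X y - g) * Q)"
    using assms(1)
  proof (induction rule: pr_induct)
    case (const c)
    have "Poly_Mapping.single 0 c - subst (X(y := g)) (Poly_Mapping.single 0 c) = (X y - g) * 0" by simp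
    then show ?case using pr_const[of c W] pr_0 by blast
  next
    case (var v)
    show ?case
    proof (cases "v = y")
      case True
      then have "X v - subst (X(y := g)) (X v) = (X y - g) * 1" by simp
      then show ?thesis using var pr_X[of v W] pr_1 by blast
    next
      case False
      then have "X v - subst (X(y := g)) (X v) = (X y - g) * 0" by simp
      then show ?thesis using var pr_X[of v W] pr_0 by blast
    qed
  next
    case (add p q)
    then obtain Q1 Q2 where q1: "Q1 \<in> pr W" "p - subst (X(y := g)) p = (X y - g) * Q1"
      and q2: "Q2 \<in> pr W" "q - subst (X(y := g)) q = (X y - g) * Q2" by blast
    have "p + q - subst (X(y := g)) (p + q) = (p - subst (X(y := g)) p) + (q - subst (X(y := g)) q)"
      by (simp add: subst_add)
    also have "\<dots> = (X y - g) * (Q1 + Q2)" unfolding q1(2) q2(2) by (simp add: distrib_left)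
    finally have e: "p + q - subst (X(y := g)) (p + q) = (X y - g) * (Q1 + Q2)" .
    have "p + q \<in> pr W" "Q1 + Q2 \<in> pr W" using add q1 q2 by (auto intro: pr_add)
    then show ?case using e by blast
  next
    case (mult p q)
    then obtain Q1 Q2 where q1: "Q1 \<in> pr W" "p - subst (X(y := g)) p = (X y - g) * Q1"
      and q2: "Q2 \<in> pr W" "q - subst (X(y := g)) q = (X y - g) * Q2" by blast
    have th: "subst (X(y := g)) q \<in> pr W"
      by (rule subst_in[where W=W]) (use mult assms in \<open>auto intro: pr_X\<close>)
    have "p * q - subst (X(y := g)) (p * q) = p * (q - subst (X(y := g)) q) + subst (X(y := g)) q * (p - subst (X(y := g)) p)"
      unfolding subst_mult by (simp add: algebra_simps)
    also have "\<dots> = (X y - g) * (p * Q2 + subst (X(y := g)) q * Q1)"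
      unfolding q1(2) q2(2) by (simp add: algebra_simps)
    finally have e: "p * q - subst (X(y := g)) (p * q) = (X y - g) * (p * Q2 + subst (X(y := g)) q * Q1)" .
    have "p * q \<in> pr W" "p * Q2 + subst (X(y := g)) q * Q1 \<in> pr W" using mult q1 q2 th by (auto intro: pr_add pr_mult)
    then show ?case using e by blast
  qed
  then show ?thesis by blast
qed




lemma ideal_Nil: "ideal_in (pr V) [] = {0}"
  unfolding ideal_in_def by (auto intro!: exI[of _ "\<lambda>_. 0"])

lemma ideal_snoc:
  "ideal_in (pr V) (fs @ [f]) = {p + c * f | p c. p \<in> ideal_in (pr V) fs \<and> c \<in> pr V}"
proof (intro set_eqI iffI)
  fix x assume "x \<in> ideal_in (pr V) (fs @ [f])"
  then obtain c where c: "\<forall>k. c k \<in> pr V" and x: "x = (\<Sum>k<length (fs@[f]). c k * (fs@[f]) ! k)"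
    unfolding ideal_in_def by blast
  have "x = (\<Sum>k<length fs. c k * fs ! k) + c (length fs) * f"
    unfolding x by (simp add: nth_append)
  moreover have "(\<Sum>k<length fs. c k * fs ! k) \<in> ideal_in (pr V) fs"
    unfolding ideal_in_def using c by blast
  ultimately show "x \<in> {p + c * f | p c. p \<in> ideal_in (pr V) fs \<and> c \<in> pr V}"
    using c by blast
next
  fix x assume "x \<in> {p + c * f | p c. p \<in> ideal_in (pr V) fs \<and> c \<in> pr V}"
  then obtain p d where p: "p \<in> ideal_in (pr V) fs" and d: "d \<in> pr V" and x: "x = p + d * f" by blast
  from p obtain c where c: "\<forall>k. c k \<in> pr V" and pc: "p = (\<Sum>k<length fs. c k * fs ! k)"
    unfolding ideal_in_def by blast
  let ?c = "c(length fs := d)"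
  have "x = (\<Sum>k<length (fs@[f]). ?c k * (fs@[f]) ! k)"
    unfolding x pc by (simp add: nth_append)
  moreover have "\<forall>k. ?c k \<in> pr V" using c d by simp
  ultimately show "x \<in> ideal_in (pr V) (fs @ [f])" unfolding ideal_in_def by blast
qed

lemma ideal_add:
  assumes "p \<in> ideal_in (pr V) fs" "q \<in> ideal_in (pr V) fs"
  shows "p + q \<in> ideal_in (pr V) fs"
proof -
  from assms obtain c d where c: "\<forall>k. c k \<in> pr V" "p = (\<Sum>k<length fs. c k * fs ! k)"
    and d: "\<forall>k. d k \<in> pr V" "q = (\<Sum>k<length fs. d k * fs ! k)"
    unfolding ideal_in_def by blast
  have "p + q = (\<Sum>k<length fs. (c k + d k) * fs ! k)"
    unfolding c d by (simp add: distrib_right sum.distrib)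
  moreover have "\<forall>k. c k + d k \<in> pr V" using c d pr_add by blast
  ultimately show ?thesis unfolding ideal_in_def by (auto intro!: exI[of _ "\<lambda>k. c k + d k"])
qed

lemma ideal_mult:
  assumes "p \<in> ideal_in (pr V) fs" "a \<in> pr V"
  shows "a * p \<in> ideal_in (pr V) fs"
proof -
  from assms obtain c where c: "\<forall>k. c k \<in> pr V" "p = (\<Sum>k<length fs. c k * fs ! k)"
    unfolding ideal_in_def by blast
  have "a * p = (\<Sum>k<length fs. (a * c k) * fs ! k)"
    unfolding c by (simp add: sum_distrib_left mult.assoc)
  moreover have "\<forall>k. a * c k \<in> pr V" using c assms pr_mult by blast
  ultimately show ?thesis unfolding ideal_in_def by (auto intro!: exI[of _ "\<lambda>k. a * c k"])
qed

definition Kp :: "mpoly list \<Rightarrow> (nat \<times> nat \<Rightarrow> mpoly) set \<Rightarrow> bool" where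
  "Kp fs S \<longleftrightarrow> (\<forall>\<rho>\<in>S. \<forall>f\<in>set fs. subst \<rho> f = 0)"

definition Cp :: "(nat \<times> nat) set \<Rightarrow> mpoly list \<Rightarrow> (nat \<times> nat \<Rightarrow> mpoly) set \<Rightarrow> bool" where
  "Cp V fs S \<longleftrightarrow> (\<forall>P\<in>pr V. (\<forall>\<rho>\<in>S. subst \<rho> P = 0) \<longrightarrow> P \<in> ideal_in (pr V) fs)"

definition Good :: "(nat \<times> nat) set \<Rightarrow> mpoly list \<Rightarrow> (nat \<times> nat \<Rightarrow> mpoly) set \<Rightarrow> bool" where
  "Good V fs S \<longleftrightarrow> set fs \<subseteq> pr V \<and> Kp fs S \<and> Cp V fs S \<and>
     (\<forall>k<length fs. \<forall>a\<in>pr V. a * fs ! k \<in> ideal_in (pr V) (take k fs) \<longrightarrow> a \<in> ideal_in (pr V) (take k fs))"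

lemma kill:
  assumes "Kp fs S" "\<rho> \<in> S" "P \<in> ideal_in (pr V) fs"
  shows "subst \<rho> P = 0"
proof -
  from assms(3) obtain c where "P = (\<Sum>k<length fs. c k * fs ! k)"
    unfolding ideal_in_def by blast
  then show ?thesis using assms(1,2) unfolding Kp_def
    by (simp add: subst_sum subst_mult)
qed

lemma good_Nil: "Good V [] {X}"
  unfolding Good_def Kp_def Cp_def by (simp add: ideal_Nil)

lemma good_snoc:
  assumes "Good V fs S" "f \<in> pr V" "\<And>\<rho>. \<rho> \<in> S \<Longrightarrow> subst \<rho> f \<noteq> 0"
    "Kp (fs @ [f]) S'" "Cp V (fs @ [f]) S'"
  shows "Good V (fs @ [f]) S'"
proof -
  have nzd: "a \<in> ideal_in (pr V) fs" if a: "a \<in> pr V" "a * f \<in> ideal_in (pr V) fs" for a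
  proof -
    have "subst \<rho> a = 0" if "\<rho> \<in> S" for \<rho>
    proof -
      have "subst \<rho> (a * f) = 0" using kill[of fs S \<rho> "a*f" V] assms(1) that a
        unfolding Good_def by blast
      then show ?thesis using assms(3)[OF that] by (simp add: subst_mult)
    qed
    then show ?thesis using assms(1) a unfolding Good_def Cp_def by blast
  qed
  show ?thesis
    unfolding Good_def
  proof (intro conjI allI impI ballI)
    show "set (fs @ [f]) \<subseteq> pr V" using assms(1,2) unfolding Good_def by auto
    show "Kp (fs @ [f]) S'" "Cp V (fs @ [f]) S'" by fact+
  next
    fix k a assume k: "k < length (fs @ [f])" and a: "a \<in> pr V"
      and h: "a * (fs @ [f]) ! k \<in> ideal_in (pr V) (take k (fs @ [f]))"
    show "a \<in> ideal_in (pr V) (take k (fs @ [f]))"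
    proof (cases "k < length fs")
      case True
      then show ?thesis using assms(1) a h unfolding Good_def by (simp add: nth_append)
    next
      case False
      then have "k = length fs" using k by simp
      then show ?thesis using nzd a h by simp
    qed
  qed
qed

lemma good_regular:
  assumes "Good V fs S" "S \<noteq> {}"
  shows "regular_seq_in (pr V) fs"
proof -
  obtain \<rho> where r: "\<rho> \<in> S" using assms(2) by blast
  have "1 \<notin> ideal_in (pr V) fs"
    using kill[of fs S \<rho> 1 V] assms(1) r unfolding Good_def by auto
  then show ?thesis using assms(1) unfolding Good_def regular_seq_in_def by blast
qed

lemma lin_C:
  assumes "Cp V fs S" "y \<in> V" "g \<in> pr V"
  shows "Cp V (fs @ [X y - g]) ((\<lambda>\<rho>. comp_s \<rho> (X(y := g))) ` S)"
  unfolding Cp_def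
proof (intro ballI impI)
  fix P assume P: "P \<in> pr V" and h: "\<forall>\<rho>\<in>(\<lambda>\<rho>. comp_s \<rho> (X(y := g))) ` S. subst \<rho> P = 0"
  let ?t = "X(y := g)"
  have tP: "subst ?t P \<in> pr V" using P assms by (auto intro!: subst_in[where W=V] simp: pr_X)
  have "subst \<rho> (subst ?t P) = 0" if "\<rho> \<in> S" for \<rho>
    using h that by (simp add: subst_comp)
  then have i: "subst ?t P \<in> ideal_in (pr V) fs" using assms(1) tP unfolding Cp_def by blast
  obtain Q where Q: "Q \<in> pr V" "P - subst ?t P = (X y - g) * Q"
    using subst_divide[OF P assms(2,3)] by blast
  have "P = subst ?t P + Q * (X y - g)" using Q(2) by (simp add: algebra_simps)
  then show "P \<in> ideal_in (pr V) (fs @ [X y - g])"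
    unfolding ideal_snoc using i Q(1) by blast
qed




lemma quad_C:
  assumes C: "Cp V fs S" and xV: "x \<in> V" and yV: "y \<in> V" and xy: "x \<noteq> y"
    and aV: "a \<in> pr V" and bV: "b \<in> pr V"
    and faa: "subst (X(x:=a)) a = a" and fab: "subst (X(x:=a)) b = b"
    and fba: "subst (X(x:=b)) a = a" and fbb: "subst (X(x:=b)) b = b"
    and nz: "\<And>\<rho>. \<rho> \<in> S \<Longrightarrow> subst \<rho> (b - a) \<noteq> 0"
  shows "Cp V ((fs @ [X x + X y - a - b]) @ [X x * X y - a * b])
     ((\<lambda>\<rho>. comp_s \<rho> (X(x:=a, y:=b))) ` S \<union> (\<lambda>\<rho>. comp_s \<rho> (X(x:=b, y:=a))) ` S)"
  unfolding Cp_def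
proof (intro ballI impI)
  fix P assume P: "P \<in> pr V"
    and h: "\<forall>\<rho>\<in>(\<lambda>\<rho>. comp_s \<rho> (X(x:=a, y:=b))) ` S \<union> (\<lambda>\<rho>. comp_s \<rho> (X(x:=b, y:=a))) ` S. subst \<rho> P = 0"
  define ts where "ts = X(y := a + b - X x)"
  define ta where "ta = X(x := a)"
  define tb where "tb = X(x := b)"
  have gV: "a + b - X x \<in> pr V" using aV bV xV by (simp add: pr_add pr_diff pr_X)
  have ca: "comp_s ta ts = X(x:=a, y:=b)"
    using xy by (auto simp: fun_eq_iff comp_s_def ta_def ts_def subst_add subst_diff faa fab)
  have cb: "comp_s tb ts = X(x:=b, y:=a)"
    using xy by (auto simp: fun_eq_iff comp_s_def tb_def ts_def subst_add subst_diff fba fbb)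
  have cab: "comp_s tb ta = ta"
    by (auto simp: fun_eq_iff comp_s_def tb_def ta_def fba)
  have inV: "\<And>t Q. Q \<in> pr V \<Longrightarrow> (\<And>v. v \<in> V \<Longrightarrow> t v \<in> pr V) \<Longrightarrow> subst t Q \<in> pr V"
    by (rule subst_in)
  have tsV: "v \<in> V \<Longrightarrow> ts v \<in> pr V" for v using gV by (simp add: ts_def pr_X)
  have taV: "v \<in> V \<Longrightarrow> ta v \<in> pr V" for v using aV by (simp add: ta_def pr_X)
  have tbV: "v \<in> V \<Longrightarrow> tb v \<in> pr V" for v using bV by (simp add: tb_def pr_X)
  define P1 where "P1 = subst ts P"
  have P1V: "P1 \<in> pr V" unfolding P1_def using inV[OF P tsV] .
  obtain Q0 where Q0: "Q0 \<in> pr V" "P - P1 = (X y - (a + b - X x)) * Q0"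
    using subst_divide[OF P yV gV] unfolding P1_def ts_def by blast
  obtain Q where Q: "Q \<in> pr V" "P1 - subst ta P1 = (X x - a) * Q"
    using subst_divide[OF P1V xV aV] unfolding ta_def by blast
  have taP1V: "subst ta P1 \<in> pr V" using inV[OF P1V taV] .
  have tbQV: "subst tb Q \<in> pr V" using inV[OF Q(1) tbV] .
  have ha: "subst \<rho> (subst ta P1) = 0" if "\<rho> \<in> S" for \<rho>
  proof -
    have "subst (comp_s \<rho> (X(x:=a, y:=b))) P = 0" using h that by blast
    then show ?thesis unfolding P1_def by (simp add: subst_comp[symmetric] comp_s_def ca[symmetric])
  qed
  have hb: "subst \<rho> (subst tb P1) = 0" if "\<rho> \<in> S" for \<rho>
  proof -
    have "subst (comp_s \<rho> (X(x:=b, y:=a))) P = 0" using h that by blast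
    then show ?thesis unfolding P1_def by (simp add: subst_comp[symmetric] comp_s_def cb[symmetric])
  qed
  have hQ: "subst \<rho> (subst tb Q) = 0" if r: "\<rho> \<in> S" for \<rho>
  proof -
    have c1: "subst tb (subst ta P1) = subst ta P1"
      using subst_comp[of tb ta P1] cab by simp
    have c2: "subst tb (X x - a) = b - a"
      by (simp add: subst_diff tb_def fba)
    have "subst tb P1 - subst ta P1 = subst tb (P1 - subst ta P1)"
      by (simp add: subst_diff c1)
    also have "\<dots> = (b - a) * subst tb Q"
      unfolding Q(2) subst_mult c2 ..
    finally have "subst \<rho> (subst tb P1 - subst ta P1) = subst \<rho> ((b - a) * subst tb Q)" by simp
    then have "subst \<rho> (b - a) * subst \<rho> (subst tb Q) = 0"
      using ha[OF r] hb[OF r] by (simp add: subst_diff subst_mult)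
    then show ?thesis using nz[OF r] by simp
  qed
  have i1: "subst ta P1 \<in> ideal_in (pr V) fs" using C taP1V ha unfolding Cp_def by blast
  have i2: "subst tb Q \<in> ideal_in (pr V) fs" using C tbQV hQ unfolding Cp_def by blast
  obtain Q2 where Q2: "Q2 \<in> pr V" "Q - subst tb Q = (X x - b) * Q2"
    using subst_divide[OF Q(1) xV bV] unfolding tb_def by blast
  have e0: "P = P1 + (X y - (a + b - X x)) * Q0" using Q0(2) by (simp add: algebra_simps)
  have e1: "P1 = subst ta P1 + (X x - a) * Q" using Q(2) by (simp add: algebra_simps)
  have e2: "Q = subst tb Q + (X x - b) * Q2" using Q2(2) by (simp add: algebra_simps)
  have eq: "P = (subst ta P1 + (X x - a) * subst tb Q) + (Q0 + X x * Q2) * (X x + X y - a - b)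
       + (- Q2) * (X x * X y - a * b)"
    apply (subst e0, subst e1, subst e2)
    by algebra
  have "subst ta P1 + (X x - a) * subst tb Q \<in> ideal_in (pr V) fs"
    using i1 i2 aV xV by (intro ideal_add ideal_mult) (auto simp: pr_diff pr_X)
  moreover have "Q0 + X x * Q2 \<in> pr V" "- Q2 \<in> pr V"
    using Q0 Q2 xV by (auto simp: pr_add pr_mult pr_X pr_uminus)
  ultimately show "P \<in> ideal_in (pr V) ((fs @ [X x + X y - a - b]) @ [X x * X y - a * b])"
    unfolding ideal_snoc using eq by blast
qed




definition ev :: "nat \<times> nat \<Rightarrow> nat \<times> nat \<Rightarrow> mpoly" where
  "ev w = (\<lambda>v. if v = w then 1 else 0)"

lemma nz_eval: "subst e P \<noteq> 0 \<Longrightarrow> P \<noteq> 0"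
  by auto

definition InvL :: "nat \<Rightarrow> nat \<Rightarrow> nat \<Rightarrow> nat set \<Rightarrow> (nat \<times> nat \<Rightarrow> mpoly) set \<Rightarrow> bool" where
  "InvL m i s D S \<longleftrightarrow> S \<noteq> {} \<and> (\<forall>\<rho>\<in>S. (\<forall>v. i < fst v \<longrightarrow> \<rho> v = X v) \<and>
     (\<forall>j. j \<notin> D \<and> j \<noteq> s \<and> j \<noteq> s+1 \<longrightarrow> \<rho> (i,j) = X (i,j)) \<and>
     (\<exists>\<pi>. inj_on \<pi> {1..m} \<and> (\<forall>j\<in>{1..m}. j \<noteq> s \<and> j \<noteq> s+1 \<longrightarrow> \<rho> (i-1,j) = X (0, \<pi> j)) \<and>
        (\<forall>j\<in>{1..m}. (j \<in> D \<or> j = s \<or> j = s+1) \<longrightarrow> \<rho> (i,j) = X (0, \<pi> j))))"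

definition W :: "nat \<Rightarrow> nat \<Rightarrow> nat set \<Rightarrow> (nat \<times> nat) set" where
  "W i s D = {v. fst v < i} \<union> {(i,j) | j. j \<in> D \<or> j = s \<or> j = s+1}"

lemma loop_step:
  assumes i: "1 \<le> i" "i \<le> r" and j: "j \<in> {1..m}" "j \<notin> D" "j \<noteq> s" "j \<noteq> s+1"
    and inv: "InvL m i s D S" and good: "Good ({0..r} \<times> {1..m}) fs S"
    and fsW: "set fs \<subseteq> pr (W i s D)"
  shows "\<exists>S'. InvL m i s (insert j D) S' \<and> Good ({0..r} \<times> {1..m}) (fs @ [Var i j - Var (i-1) j]) S'
     \<and> set (fs @ [Var i j - Var (i-1) j]) \<subseteq> pr (W i s (insert j D))"
proof -
  let ?V = "{0..r} \<times> {1..m}"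
  let ?f = "X (i,j) - X (i-1,j)"
  let ?t = "X((i,j) := X (i-1,j))"
  define S' where "S' = (\<lambda>\<rho>. comp_s \<rho> ?t) ` S"
  have fV: "?f \<in> pr ?V" using i j by (auto intro!: pr_diff pr_X)
  have nz: "subst \<rho> ?f \<noteq> 0" if r: "\<rho> \<in> S" for \<rho>
  proof -
    obtain \<pi> where "\<forall>j\<in>{1..m}. j \<noteq> s \<and> j \<noteq> s+1 \<longrightarrow> \<rho> (i-1,j) = X (0, \<pi> j)"
      using inv r unfolding InvL_def by blast
    then have "\<rho> (i-1,j) = X (0, \<pi> j)" using j by blast
    moreover have "\<rho> (i,j) = X (i,j)" using inv r j unfolding InvL_def by blast
    ultimately have "subst \<rho> ?f = X (i,j) - X (0, \<pi> j)" by (simp only: subst_diff subst_X)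
    moreover have "subst (ev (i,j)) (X (i,j) - X (0, \<pi> j)) = 1" using i by (simp add: subst_diff ev_def)
    ultimately show ?thesis using nz_eval[of "ev (i,j)" "subst \<rho> ?f"] by simp
  qed
  have K: "Kp (fs @ [?f]) S'"
    unfolding Kp_def S'_def
  proof (intro ballI)
    fix \<rho>' f assume "\<rho>' \<in> (\<lambda>\<rho>. comp_s \<rho> ?t) ` S" and f: "f \<in> set (fs @ [?f])"
    then obtain \<rho> where r: "\<rho> \<in> S" "\<rho>' = comp_s \<rho> ?t" by blast
    show "subst \<rho>' f = 0"
    proof (cases "f \<in> set fs")
      case True
      have "subst ?t f = f"
        by (rule subst_fix[of f "W i s D"]) (use True fsW j in \<open>auto simp: W_def\<close>)
      then show ?thesis using r True good unfolding Good_def Kp_def by (simp add: subst_comp)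
    next
      case False
      then have "f = ?f" using f by simp
      then show ?thesis using r i by (simp add: comp_s_def subst_diff)
    qed
  qed
  have C: "Cp ?V (fs @ [?f]) S'"
    unfolding S'_def
    by (rule lin_C) (use good i j in \<open>auto simp: Good_def intro: pr_X\<close>)
  have G: "Good ?V (fs @ [?f]) S'"
    by (rule good_snoc[OF good fV nz K C])
  have I: "InvL m i s (insert j D) S'"
    unfolding InvL_def
  proof (intro conjI ballI)
    show "S' \<noteq> {}" using inv unfolding InvL_def S'_def by blast
  next
    fix \<rho>' assume "\<rho>' \<in> S'"
    then obtain \<rho> where r: "\<rho> \<in> S" and rr: "\<rho>' = comp_s \<rho> ?t" unfolding S'_def by blast
    have ev': "\<rho>' v = (if v = (i,j) then \<rho> (i-1,j) else \<rho> v)" for v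
      unfolding rr comp_s_def by simp
    from r inv have A: "\<forall>v. i < fst v \<longrightarrow> \<rho> v = X v"
      and B: "\<forall>j. j \<notin> D \<and> j \<noteq> s \<and> j \<noteq> s+1 \<longrightarrow> \<rho> (i,j) = X (i,j)"
      and "\<exists>\<pi>. inj_on \<pi> {1..m} \<and> (\<forall>j\<in>{1..m}. j \<noteq> s \<and> j \<noteq> s+1 \<longrightarrow> \<rho> (i-1,j) = X (0, \<pi> j)) \<and>
        (\<forall>j\<in>{1..m}. (j \<in> D \<or> j = s \<or> j = s+1) \<longrightarrow> \<rho> (i,j) = X (0, \<pi> j))"
      unfolding InvL_def by blast+
    then obtain \<pi> where p: "inj_on \<pi> {1..m}" and p1: "\<forall>j\<in>{1..m}. j \<noteq> s \<and> j \<noteq> s+1 \<longrightarrow> \<rho> (i-1,j) = X (0, \<pi> j)"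
      and p2: "\<forall>j\<in>{1..m}. (j \<in> D \<or> j = s \<or> j = s+1) \<longrightarrow> \<rho> (i,j) = X (0, \<pi> j)" by blast
    show "(\<forall>v. i < fst v \<longrightarrow> \<rho>' v = X v)" using A i by (auto simp: ev')
    show "\<forall>j'. j' \<notin> insert j D \<and> j' \<noteq> s \<and> j' \<noteq> s+1 \<longrightarrow> \<rho>' (i,j') = X (i,j')"
      using B by (auto simp: ev')
    have "\<forall>j'\<in>{1..m}. j' \<noteq> s \<and> j' \<noteq> s+1 \<longrightarrow> \<rho>' (i-1,j') = X (0, \<pi> j')"
      using p1 i by (auto simp: ev')
    moreover have "\<forall>j'\<in>{1..m}. (j' \<in> insert j D \<or> j' = s \<or> j' = s+1) \<longrightarrow> \<rho>' (i,j') = X (0, \<pi> j')"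
      using p1 p2 j by (auto simp: ev')
    ultimately show "\<exists>\<pi>. inj_on \<pi> {1..m} \<and> (\<forall>j\<in>{1..m}. j \<noteq> s \<and> j \<noteq> s+1 \<longrightarrow> \<rho>' (i-1,j) = X (0, \<pi> j)) \<and>
        (\<forall>j'\<in>{1..m}. (j' \<in> insert j D \<or> j' = s \<or> j' = s+1) \<longrightarrow> \<rho>' (i,j') = X (0, \<pi> j'))"
      using p by blast
  qed
  have "set (fs @ [?f]) \<subseteq> pr (W i s (insert j D))"
  proof -
    have "W i s D \<subseteq> W i s (insert j D)" unfolding W_def by auto
    then have "set fs \<subseteq> pr (W i s (insert j D))" using fsW pr_mono by blast
    moreover have "?f \<in> pr (W i s (insert j D))" using i by (auto simp: W_def intro!: pr_diff pr_X)
    ultimately show ?thesis by simp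
  qed
  then show ?thesis using G I by (auto simp: Var_X)
qed




lemma loop:
  assumes i: "1 \<le> i" "i \<le> r"
  shows "InvL m i s D S \<Longrightarrow> Good ({0..r} \<times> {1..m}) fs S \<Longrightarrow> set fs \<subseteq> pr (W i s D) \<Longrightarrow>
    distinct js \<Longrightarrow> set js \<subseteq> {1..m} \<Longrightarrow> (\<forall>j\<in>set js. j \<notin> D \<and> j \<noteq> s \<and> j \<noteq> s+1) \<Longrightarrow>
    \<exists>S'. InvL m i s (D \<union> set js) S' \<and> Good ({0..r} \<times> {1..m}) (fs @ map (\<lambda>j. Var i j - Var (i-1) j) js) S'
      \<and> set (fs @ map (\<lambda>j. Var i j - Var (i-1) j) js) \<subseteq> pr (W i s (D \<union> set js))"
proof (induction js arbitrary: fs S D)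
  case Nil
  then show ?case by auto
next
  case (Cons j js)
  obtain S1 where S1: "InvL m i s (insert j D) S1"
    "Good ({0..r} \<times> {1..m}) (fs @ [Var i j - Var (i-1) j]) S1"
    "set (fs @ [Var i j - Var (i-1) j]) \<subseteq> pr (W i s (insert j D))"
    using loop_step[OF i, of j m D s S fs] Cons.prems by auto
  have "\<exists>S'. InvL m i s (insert j D \<union> set js) S' \<and>
     Good ({0..r} \<times> {1..m}) ((fs @ [Var i j - Var (i-1) j]) @ map (\<lambda>j. Var i j - Var (i-1) j) js) S'
      \<and> set ((fs @ [Var i j - Var (i-1) j]) @ map (\<lambda>j. Var i j - Var (i-1) j) js) \<subseteq> pr (W i s (insert j D \<union> set js))"
    by (rule Cons.IH[OF S1]) (use Cons.prems in auto)
  then show ?case by simp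
qed

definition InvE :: "nat \<Rightarrow> nat \<Rightarrow> (nat \<times> nat \<Rightarrow> mpoly) set \<Rightarrow> bool" where
  "InvE m i S \<longleftrightarrow> S \<noteq> {} \<and> (\<forall>\<rho>\<in>S. (\<forall>v. i \<le> fst v \<longrightarrow> \<rho> v = X v) \<and>
     (\<exists>\<pi>. inj_on \<pi> {1..m} \<and> (\<forall>j\<in>{1..m}. \<rho> (i-1,j) = X (0, \<pi> j))))"




lemma edge:
  assumes i: "1 \<le> i" "i \<le> r" and s: "1 \<le> s" "s + 1 \<le> m"
    and inv: "InvE m i S" and good: "Good ({0..r} \<times> {1..m}) fs S"
    and fsW: "set fs \<subseteq> pr {v. fst v < i}"
  shows "\<exists>S'. InvE m (i+1) S' \<and> Good ({0..r} \<times> {1..m}) (fs @ edge_elems m i s) S'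
     \<and> set (fs @ edge_elems m i s) \<subseteq> pr {v. fst v < i+1}"
proof -
  define V where "V = {0..r} \<times> {1..m}"
  define x where "x = (i, s)"
  define y where "y = (i, s+1)"
  define a where "a = X (i-1, s)"
  define b where "b = X (i-1, s+1)"
  define f1 where "f1 = X x + X y - a - b"
  define f2 where "f2 = X x * X y - a * b"
  define L where "L = filter (\<lambda>j. j \<noteq> s \<and> j \<noteq> s+1) [1..<m+1]"
  have e: "edge_elems m i s = [f1, f2] @ map (\<lambda>j. Var i j - Var (i-1) j) L"
    by (simp add: edge_elems_def f1_def f2_def L_def Var_X x_def y_def a_def b_def)
  have xV: "x \<in> V" and yV: "y \<in> V" using i s by (auto simp: V_def x_def y_def)
  have xy: "x \<noteq> y" by (simp add: x_def y_def)
  have aV: "a \<in> pr V" and bV: "b \<in> pr V" using i s by (auto simp: V_def a_def b_def intro!: pr_X)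
  have gV: "a + b - X x \<in> pr V" using aV bV xV by (intro pr_diff pr_add pr_X)
  have f1V: "f1 \<in> pr V" unfolding f1_def using aV bV xV yV by (intro pr_diff pr_add pr_X)
  have f2V: "f2 \<in> pr V" unfolding f2_def using aV bV xV yV by (intro pr_diff pr_mult pr_X)
  have Sinfo: "\<exists>\<pi>. inj_on \<pi> {1..m} \<and> (\<forall>j\<in>{1..m}. \<rho> (i-1,j) = X (0, \<pi> j)) \<and> (\<forall>v. i \<le> fst v \<longrightarrow> \<rho> v = X v)"
    if "\<rho> \<in> S" for \<rho> using inv that unfolding InvE_def by blast
  have s_in: "s \<in> {1..m}" "s+1 \<in> {1..m}" using s by auto
  define ts where "ts = X(y := a + b - X x)"
  define S1 where "S1 = (\<lambda>\<rho>. comp_s \<rho> ts) ` S"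
  have f1eq: "f1 = X y - (a + b - X x)" unfolding f1_def by (simp add: algebra_simps)
  have C1: "Cp V (fs @ [f1]) S1"
    unfolding f1eq S1_def ts_def
    by (rule lin_C) (use good yV gV in \<open>auto simp: Good_def V_def\<close>)
  have nz1: "subst \<rho> f1 \<noteq> 0" if r: "\<rho> \<in> S" for \<rho>
  proof -
    obtain \<pi> where p: "\<forall>j\<in>{1..m}. \<rho> (i-1,j) = X (0, \<pi> j)" "\<forall>v. i \<le> fst v \<longrightarrow> \<rho> v = X v"
      using Sinfo[OF r] by blast
    have "subst \<rho> f1 = X x + X y - X (0, \<pi> s) - X (0, \<pi> (s+1))"
      using p s_in by (simp add: f1_def subst_add subst_diff a_def b_def x_def y_def)
    moreover have "subst (ev x) (X x + X y - X (0, \<pi> s) - X (0, \<pi> (s+1))) = 1"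
      using i by (simp add: subst_add subst_diff ev_def x_def y_def)
    ultimately show ?thesis using nz_eval[of "ev x" "subst \<rho> f1"] by simp
  qed
  have tsfix: "subst ts f = f" if "f \<in> pr {v. fst v < i}" for f
    by (rule subst_fix[OF that]) (auto simp: ts_def y_def)
  have ts_f1: "subst ts f1 = 0"
  proof -
    have "subst ts a = a" "subst ts b = b" "subst ts (X x) = X x" "subst ts (X y) = a + b - X x"
      using i by (auto simp: ts_def a_def b_def x_def y_def)
    then show ?thesis by (simp add: f1_def subst_add subst_diff)
  qed
  have K1: "Kp (fs @ [f1]) S1"
    unfolding Kp_def S1_def
  proof (intro ballI)
    fix \<rho>' f assume "\<rho>' \<in> (\<lambda>\<rho>. comp_s \<rho> ts) ` S" and f: "f \<in> set (fs @ [f1])"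
    then obtain \<rho> where r: "\<rho> \<in> S" "\<rho>' = comp_s \<rho> ts" by blast
    show "subst \<rho>' f = 0"
    proof (cases "f \<in> set fs")
      case True
      then have "subst ts f = f" using fsW tsfix by blast
      then show ?thesis using r True good unfolding Good_def Kp_def by (simp add: subst_comp)
    next
      case False
      then have "f = f1" using f by simp
      then show ?thesis using r ts_f1 by (simp add: subst_comp)
    qed
  qed
  have G1: "Good V (fs @ [f1]) S1"
    by (rule good_snoc[OF good[folded V_def] f1V nz1 K1 C1])
  define ta where "ta = X(x := a, y := b)"
  define tb where "tb = X(x := b, y := a)"
  define S2 where "S2 = (\<lambda>\<rho>. comp_s \<rho> ta) ` S \<union> (\<lambda>\<rho>. comp_s \<rho> tb) ` S"
  have nzba: "subst \<rho> (b - a) \<noteq> 0" if r: "\<rho> \<in> S" for \<rho>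
  proof -
    obtain \<pi> where p: "inj_on \<pi> {1..m}" "\<forall>j\<in>{1..m}. \<rho> (i-1,j) = X (0, \<pi> j)"
      using Sinfo[OF r] by blast
    have ne: "\<pi> s \<noteq> \<pi> (s+1)" using p(1) s_in by (metis inj_on_contraD n_not_Suc_n Suc_eq_plus1)
    have "subst \<rho> (b - a) = X (0, \<pi> (s+1)) - X (0, \<pi> s)"
      using p s_in by (simp add: subst_diff a_def b_def)
    moreover have "subst (ev (0, \<pi> (s+1))) (X (0, \<pi> (s+1)) - X (0, \<pi> s)) = 1"
      using ne by (simp add: subst_diff ev_def)
    ultimately show ?thesis using nz_eval[of "ev (0, \<pi> (s+1))" "subst \<rho> (b - a)"] by simp
  qed
  have C0: "Cp V fs S" using good unfolding Good_def V_def by blast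
  have C2: "Cp V ((fs @ [f1]) @ [f2]) S2"
    unfolding S2_def ta_def tb_def f1_def f2_def
    by (rule quad_C[OF C0 xV yV xy aV bV _ _ _ _ nzba])
       (use i in \<open>auto simp: a_def b_def x_def y_def\<close>)
  have nz2: "subst \<rho>1 f2 \<noteq> 0" if r1: "\<rho>1 \<in> S1" for \<rho>1
  proof -
    obtain \<rho> where r: "\<rho> \<in> S" "\<rho>1 = comp_s \<rho> ts" using r1 unfolding S1_def by blast
    obtain \<pi> where p: "\<forall>j\<in>{1..m}. \<rho> (i-1,j) = X (0, \<pi> j)" "\<forall>v. i \<le> fst v \<longrightarrow> \<rho> v = X v"
      using Sinfo[OF r(1)] by blast
    have "subst ts a = a" "subst ts b = b" "subst ts (X x) = X x" "subst ts (X y) = a + b - X x"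
      using i by (auto simp: ts_def a_def b_def x_def y_def)
    then have "subst ts f2 = X x * (a + b - X x) - a * b"
      by (simp add: f2_def subst_mult subst_diff)
    moreover have "subst \<rho> (X x * (a + b - X x) - a * b) =
        X x * (X (0, \<pi> s) + X (0, \<pi> (s+1)) - X x) - X (0, \<pi> s) * X (0, \<pi> (s+1))"
      using p s_in by (simp add: subst_add subst_mult subst_diff a_def b_def x_def)
    moreover have "subst (ev x) (X x * (X (0, \<pi> s) + X (0, \<pi> (s+1)) - X x) - X (0, \<pi> s) * X (0, \<pi> (s+1))) = -1"
      using i by (simp add: subst_add subst_mult subst_diff ev_def x_def)
    ultimately have "subst (ev x) (subst \<rho>1 f2) = -1"
      using r(2) by (simp add: subst_comp)
    then show ?thesis using nz_eval[of "ev x" "subst \<rho>1 f2"] by simp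
  qed
  have tafix: "subst ta f = f" if "f \<in> pr {v. fst v < i}" for f
    by (rule subst_fix[OF that]) (auto simp: ta_def x_def y_def)
  have tbfix: "subst tb f = f" if "f \<in> pr {v. fst v < i}" for f
    by (rule subst_fix[OF that]) (auto simp: tb_def x_def y_def)
  have ta_f: "subst ta f1 = 0" "subst ta f2 = 0"
  proof -
    have "subst ta a = a" "subst ta b = b" "subst ta (X x) = a" "subst ta (X y) = b"
      using i xy by (auto simp: ta_def a_def b_def x_def y_def)
    then show "subst ta f1 = 0" "subst ta f2 = 0" by (simp_all add: f1_def f2_def subst_add subst_diff subst_mult)
  qed
  have tb_f: "subst tb f1 = 0" "subst tb f2 = 0"
  proof -
    have "subst tb a = a" "subst tb b = b" "subst tb (X x) = b" "subst tb (X y) = a"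
      using i xy by (auto simp: tb_def a_def b_def x_def y_def)
    then show "subst tb f1 = 0" "subst tb f2 = 0" by (simp_all add: f1_def f2_def subst_add subst_diff subst_mult mult.commute)
  qed
  have K2: "Kp ((fs @ [f1]) @ [f2]) S2"
    unfolding Kp_def S2_def
  proof (intro ballI)
    fix \<rho>' f assume rr: "\<rho>' \<in> (\<lambda>\<rho>. comp_s \<rho> ta) ` S \<union> (\<lambda>\<rho>. comp_s \<rho> tb) ` S"
      and f: "f \<in> set ((fs @ [f1]) @ [f2])"
    then obtain \<rho> t where r: "\<rho> \<in> S" "\<rho>' = comp_s \<rho> t" "t = ta \<or> t = tb" by blast
    have "subst t f = 0 \<or> subst t f = f \<and> f \<in> set fs"
      using f r(3) fsW tafix tbfix ta_f tb_f by auto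
    then show "subst \<rho>' f = 0"
      using r good unfolding Good_def Kp_def by (auto simp: subst_comp)
  qed
  have G2: "Good V ((fs @ [f1]) @ [f2]) S2"
    by (rule good_snoc[OF G1 f2V nz2 K2 C2])
  have inv2: "InvL m i s {} S2"
    unfolding InvL_def
  proof (intro conjI ballI)
    show "S2 \<noteq> {}" using inv unfolding InvE_def S2_def by blast
  next
    fix \<rho>' assume "\<rho>' \<in> S2"
    then obtain \<rho> t where r: "\<rho> \<in> S" "\<rho>' = comp_s \<rho> t" and t: "t = ta \<or> t = tb"
      unfolding S2_def by blast
    obtain \<pi> where p: "inj_on \<pi> {1..m}" "\<forall>j\<in>{1..m}. \<rho> (i-1,j) = X (0, \<pi> j)" "\<forall>v. i \<le> fst v \<longrightarrow> \<rho> v = X v"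
      using Sinfo[OF r(1)] by blast
    have tv: "t v = X v" if "v \<noteq> x" "v \<noteq> y" for v using t that by (auto simp: ta_def tb_def)
    have rv: "\<rho>' v = \<rho> v" if "v \<noteq> x" "v \<noteq> y" for v using tv[OF that] r(2) by (simp add: comp_s_def)
    show "\<forall>v. i < fst v \<longrightarrow> \<rho>' v = X v"
      using rv p(3) by (auto simp: x_def y_def)
    show "\<forall>j. j \<notin> {} \<and> j \<noteq> s \<and> j \<noteq> s+1 \<longrightarrow> \<rho>' (i,j) = X (i,j)"
      using rv p(3) by (auto simp: x_def y_def)
    have low: "\<forall>j\<in>{1..m}. j \<noteq> s \<and> j \<noteq> s+1 \<longrightarrow> \<rho>' (i-1,j) = X (0, \<pi> j)"
      using rv p(2) i by (auto simp: x_def y_def)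
    have ra: "subst \<rho> a = X (0, \<pi> s)" "subst \<rho> b = X (0, \<pi> (s+1))"
      using p(2) s_in by (auto simp: a_def b_def)
    show "\<exists>\<pi>. inj_on \<pi> {1..m} \<and> (\<forall>j\<in>{1..m}. j \<noteq> s \<and> j \<noteq> s+1 \<longrightarrow> \<rho>' (i-1,j) = X (0, \<pi> j)) \<and>
        (\<forall>j\<in>{1..m}. (j \<in> {} \<or> j = s \<or> j = s+1) \<longrightarrow> \<rho>' (i,j) = X (0, \<pi> j))"
      using t
    proof
      assume "t = ta"
      then have "\<rho>' (i,s) = X (0, \<pi> s)" "\<rho>' (i,s+1) = X (0, \<pi> (s+1))"
        using r(2) ra xy by (auto simp: comp_s_def ta_def x_def y_def)
      then show ?thesis using p(1) low by auto
    next
      assume "t = tb"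
      then have e1: "\<rho>' (i,s) = X (0, \<pi> (s+1))" "\<rho>' (i,s+1) = X (0, \<pi> s)"
        using r(2) ra xy by (auto simp: comp_s_def tb_def x_def y_def)
      define sw where "sw j = (if j = s then s+1 else if j = s+1 then s else j)" for j
      have "inj_on sw {1..m}" unfolding inj_on_def sw_def by auto
      moreover have "sw ` {1..m} \<subseteq> {1..m}" using s_in unfolding sw_def by auto
      ultimately have "inj_on (\<pi> \<circ> sw) {1..m}"
        using p(1) by (meson comp_inj_on inj_on_subset)
      moreover have "\<forall>j\<in>{1..m}. j \<noteq> s \<and> j \<noteq> s+1 \<longrightarrow> \<rho>' (i-1,j) = X (0, (\<pi> \<circ> sw) j)"
        using low by (auto simp: sw_def)
      moreover have "\<forall>j\<in>{1..m}. (j \<in> {} \<or> j = s \<or> j = s+1) \<longrightarrow> \<rho>' (i,j) = X (0, (\<pi> \<circ> sw) j)"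
        using e1 by (auto simp: sw_def)
      ultimately show ?thesis by blast
    qed
  qed
  have W2: "set ((fs @ [f1]) @ [f2]) \<subseteq> pr (W i s {})"
  proof -
    have "{v. fst v < i} \<subseteq> W i s {}" by (auto simp: W_def)
    then have "set fs \<subseteq> pr (W i s {})" using fsW pr_mono by blast
    moreover have "x \<in> W i s {}" "y \<in> W i s {}" "(i-1,s) \<in> W i s {}" "(i-1,s+1) \<in> W i s {}"
      using i by (auto simp: W_def x_def y_def)
    then have "f1 \<in> pr (W i s {})" "f2 \<in> pr (W i s {})"
      unfolding f1_def f2_def a_def b_def by (auto intro!: pr_add pr_diff pr_mult pr_X)
    ultimately show ?thesis by auto
  qed
  have dL: "distinct L" by (simp add: L_def)
  have sL: "set L \<subseteq> {1..m}" by (auto simp: L_def)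
  have cL: "\<forall>j\<in>set L. j \<notin> {} \<and> j \<noteq> s \<and> j \<noteq> s+1" by (simp add: L_def)
  obtain S3 where S3: "InvL m i s ({} \<union> set L) S3"
    "Good ({0..r} \<times> {1..m}) (((fs @ [f1]) @ [f2]) @ map (\<lambda>j. Var i j - Var (i-1) j) L) S3"
    "set (((fs @ [f1]) @ [f2]) @ map (\<lambda>j. Var i j - Var (i-1) j) L) \<subseteq> pr (W i s ({} \<union> set L))"
    using loop[OF i inv2 G2[unfolded V_def] W2 dL sL cL] by blast
  have "InvE m (i+1) S3"
    unfolding InvE_def
  proof (intro conjI ballI)
    show "S3 \<noteq> {}" using S3(1) unfolding InvL_def by blast
  next
    fix \<rho> assume r: "\<rho> \<in> S3"
    then obtain \<pi> where p: "inj_on \<pi> {1..m}" "\<forall>j\<in>{1..m}. (j \<in> {} \<union> set L \<or> j = s \<or> j = s+1) \<longrightarrow> \<rho> (i,j) = X (0, \<pi> j)"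
      using S3(1) unfolding InvL_def by blast
    have A: "\<forall>v. i < fst v \<longrightarrow> \<rho> v = X v" using S3(1) r unfolding InvL_def by blast
    then show "\<forall>v. i + 1 \<le> fst v \<longrightarrow> \<rho> v = X v" by simp
    have cov: "j \<in> {} \<union> set L \<or> j = s \<or> j = s+1" if "j \<in> {1..m}" for j
      using that unfolding L_def by auto
    have "\<forall>j\<in>{1..m}. \<rho> (i,j) = X (0, \<pi> j)" using p(2) cov by blast
    then have "\<forall>j\<in>{1..m}. \<rho> (i+1-1,j) = X (0, \<pi> j)" by simp
    then show "\<exists>\<pi>. inj_on \<pi> {1..m} \<and> (\<forall>j\<in>{1..m}. \<rho> (i+1-1,j) = X (0, \<pi> j))" using p(1) by blast
  qed
  moreover have Wsub: "W i s ({} \<union> set L) \<subseteq> {v. fst v < i+1}" by (auto simp: W_def)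
  have "pr (W i s ({} \<union> set L)) \<subseteq> pr {v. fst v < i+1}" using pr_mono[OF Wsub] by blast
  then have "set (((fs @ [f1]) @ [f2]) @ map (\<lambda>j. Var i j - Var (i-1) j) L) \<subseteq> pr {v. fst v < i+1}"
    using S3(3) by (rule_tac subset_trans) 
  moreover have "fs @ edge_elems m i s = ((fs @ [f1]) @ [f2]) @ map (\<lambda>j. Var i j - Var (i-1) j) L"
    unfolding e by simp
  ultimately show ?thesis using S3(2) \<open>InvE m (i+1) S3\<close> by (intro exI[of _ S3]) simp
qed




lemma main_ind:
  assumes m: "m \<ge> 2"
    and s: "\<And>i. 1 \<le> i \<Longrightarrow> i \<le> r \<Longrightarrow> 1 \<le> s i \<and> s i \<le> m - 1"
  shows "n \<le> r \<Longrightarrow> \<exists>S. InvE m (n+1) S \<and>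
    Good ({0..r} \<times> {1..m}) (concat (map (\<lambda>i. edge_elems m i (s i)) [1..<n+1])) S \<and>
    set (concat (map (\<lambda>i. edge_elems m i (s i)) [1..<n+1])) \<subseteq> pr {v. fst v < n+1}"
proof (induction n)
  case 0
  have "InvE m 1 {X}" unfolding InvE_def
    by (auto intro!: exI[of _ "\<lambda>j. j"])
  then show ?case using good_Nil by auto
next
  case (Suc n)
  then obtain S where S: "InvE m (n+1) S"
    "Good ({0..r} \<times> {1..m}) (concat (map (\<lambda>i. edge_elems m i (s i)) [1..<n+1])) S"
    "set (concat (map (\<lambda>i. edge_elems m i (s i)) [1..<n+1])) \<subseteq> pr {v. fst v < n+1}"
    by auto
  have i: "1 \<le> n+1" "n+1 \<le> r" using Suc.prems by auto
  have si: "1 \<le> s (n+1)" "s (n+1) + 1 \<le> m" using s[OF i] m by auto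
  have up: "[1..<Suc n + 1] = [1..<n+1] @ [n+1]" by simp
  show ?case
    using edge[OF i si S] unfolding up by simp
qed

theorem mainTheorem1:
  fixes m r :: nat and s :: "nat \<Rightarrow> nat"
  assumes "m \<ge> 2" and "r \<ge> 1"
    and "\<And>i. 1 \<le> i \<Longrightarrow> i \<le> r \<Longrightarrow> 1 \<le> s i \<and> s i \<le> m - 1"
  shows "regular_seq_in (poly_ring_in ({0..r} \<times> {1..m})) (full_seq m r s)"
proof -
  obtain S where S: "InvE m (r+1) S"
    "Good ({0..r} \<times> {1..m}) (concat (map (\<lambda>i. edge_elems m i (s i)) [1..<r+1])) S"
    using main_ind[of m r s r, OF assms(1) assms(3)] by auto
  have "S \<noteq> {}" using S(1) unfolding InvE_def by blast
  then show ?thesis using good_regular[OF S(2)] unfolding full_seq_def by blast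
qed


end
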